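(* Let $f:\mathbb{R}^d\to\mathbb{R}$ be $L$-smooth (i.e. $\|\nabla f(\mathbf{x})-\nabla f(\mathbf{y})\|\le L\|\mathbf{x}-\mathbf{y}\|$ for all $\mathbf{x},\mathbf{y}$) with $f_*=\inf_{\mathbf{x}} f(\mathbf{x})>-\infty$. Let $T\ge1$, $\eta>0$, $0\le\lambda\le\frac{1}{2\eta T}$, let $\mathbf{x}_1$ satisfy $\|\mathbf{x}_1\|_\infty\le\eta$ and $f(\mathbf{x}_1)-f_*\le\Delta_f$, and let $\mathbf{v}_1,\dots,\mathbf{v}_T$ be arbitrary (possibly random) vectors in $\mathbb{R}^d$. Define $\mathbf{x}_{t+1}=\mathbf{x}_t-\eta(\operatorname{sign}(\mathbf{v}_t)+\lambda\mathbf{x}_t)$ for $t=1,\dots,T$. Then $$\mathbb{E}\left[\frac1T\sum_{t=1}^T\|\nabla f(\mathbf{x}_t)\|_1\right]\le \frac{2\Delta_f}{\eta T}+4\sqrt d\,\sqrt{\mathbb{E}\left[\frac1T\sum_{t=1}^T\|\nabla f(\mathbf{x}_t)-\mathbf{v}_t\|^2\right]}+4\eta L d .$$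
   Context: $\|\cdot\|$ is the Euclidean norm, $\|\cdot\|_1$ and $\|\cdot\|_\infty$ the $\ell_1$- and max-norms. $\operatorname{sign}$ is applied coordinatewise with values in $\{-1,0,1\}$. *)

theory Defs
  imports "HOL-Analysis.Analysis" "HOL-Probability.Probability"
begin

definition vsign :: "real ^ 'n \<Rightarrow> real ^ 'n" where
  "vsign v = (\<chi> i. sgn (v $ i))"

definition norm1 :: "real ^ 'n \<Rightarrow> real" where
  "norm1 v = (\<Sum>i\<in>UNIV. \<bar>v $ i\<bar>)"

definition norm_inf :: "real ^ 'n \<Rightarrow> real" where
  "norm_inf v = Max (range (\<lambda>i. \<bar>v $ i\<bar>))"

end

theory Submission
  imports Defs
begin

lemma descent:
  fixes f :: "real ^ 'n \<Rightarrow> real" and grad :: "real ^ 'n \<Rightarrow> real ^ 'n"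
  assumes grad: "\<And>y. (f has_derivative (\<lambda>h. grad y \<bullet> h)) (at y)"
    and smooth: "\<And>y z. norm (grad y - grad z) \<le> L * norm (y - z)"
  shows "f y \<le> f x + grad x \<bullet> (y - x) + L / 2 * (norm (y - x))\<^sup>2"
proof -
  define h where "h = y - x"
  define \<psi> where "\<psi> s = f (x + s *\<^sub>R h) - s * (grad x \<bullet> h) - L / 2 * s\<^sup>2 * (norm h)\<^sup>2" for s
  have D: "(\<psi> has_real_derivative ((grad (x + s *\<^sub>R h) - grad x) \<bullet> h - L * s * (norm h)\<^sup>2)) (at s)" for s
  proof -
    have l: "((\<lambda>s. x + s *\<^sub>R h) has_derivative (\<lambda>u. u *\<^sub>R h)) (at s)"
      by (auto intro!: derivative_eq_intros)
    have c: "((\<lambda>s. f (x + s *\<^sub>R h)) has_derivative (\<lambda>u. grad (x + s *\<^sub>R h) \<bullet> (u *\<^sub>R h))) (at s)"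
      using has_derivative_compose[OF l grad] .
    have c2: "((\<lambda>s. f (x + s *\<^sub>R h)) has_real_derivative (grad (x + s *\<^sub>R h) \<bullet> h)) (at s)"
      unfolding has_field_derivative_def using c by (simp add: mult.commute[of _ "grad (x + s *\<^sub>R h) \<bullet> h"])
    show ?thesis unfolding \<psi>_def
      by (rule derivative_eq_intros c2 refl | simp)+ (simp add: inner_diff_left algebra_simps)
  qed
  have "\<psi> 1 - \<psi> 0 \<le> 0"
  proof -
    obtain z where z: "0 < z" "z < 1" "\<psi> 1 - \<psi> 0 = (1 - 0) * ((grad (x + z *\<^sub>R h) - grad x) \<bullet> h - L * z * (norm h)\<^sup>2)"
      using MVT2[of 0 1 \<psi> "\<lambda>s. (grad (x + s *\<^sub>R h) - grad x) \<bullet> h - L * s * (norm h)\<^sup>2"] D by auto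
    have "(grad (x + z *\<^sub>R h) - grad x) \<bullet> h \<le> norm (grad (x + z *\<^sub>R h) - grad x) * norm h"
      by (rule norm_cauchy_schwarz)
    also have "\<dots> \<le> L * norm (z *\<^sub>R h) * norm h"
      using smooth[of "x + z *\<^sub>R h" x] by (intro mult_right_mono) auto
    also have "\<dots> = L * z * (norm h)\<^sup>2" using z by (simp add: power2_eq_square)
    finally show ?thesis using z by simp
  qed
  thus ?thesis unfolding \<psi>_def h_def by simp
qed

lemma coord_ineq:
  fixes g w xi lam :: real
  assumes "0 \<le> lam" "lam * \<bar>xi\<bar> \<le> 1/2"
  shows "g * (sgn w + lam * xi) \<ge> \<bar>g\<bar> / 2 - 2 * \<bar>g - w\<bar>"
proof -
  have a: "g * sgn w \<ge> \<bar>g\<bar> - 2 * \<bar>g - w\<bar>"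
    by (cases "w > 0"; cases "w < 0"; cases "g \<ge> 0") (auto simp: sgn_if abs_if)
  have "\<bar>g * (lam * xi)\<bar> = \<bar>g\<bar> * (lam * \<bar>xi\<bar>)" using assms(1) by (simp add: abs_mult)
  also have "\<dots> \<le> \<bar>g\<bar> * (1/2)" using assms(2) by (intro mult_left_mono) auto
  finally have "g * (lam * xi) \<ge> - \<bar>g\<bar> / 2" by linarith
  with a show ?thesis by (simp add: algebra_simps)
qed

lemma coord_sq:
  fixes w xi lam :: real
  assumes "0 \<le> lam" "lam * \<bar>xi\<bar> \<le> 1/2"
  shows "(sgn w + lam * xi)\<^sup>2 \<le> 9/4"
proof -
  have "\<bar>sgn w + lam * xi\<bar> \<le> \<bar>sgn w\<bar> + \<bar>lam * xi\<bar>" by (rule abs_triangle_ineq)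
  also have "\<dots> \<le> 1 + 1/2" using assms by (auto simp: abs_mult sgn_if)
  finally have "\<bar>sgn w + lam * xi\<bar> \<le> 3/2" by simp
  hence "\<bar>sgn w + lam * xi\<bar>\<^sup>2 \<le> (3/2)\<^sup>2" by (intro power_mono) auto
  thus ?thesis by (simp add: power2_eq_square)
qed

lemma norm1_le: "norm1 (e :: real ^ 'n) \<le> sqrt (real CARD('n)) * norm e"
proof -
  have "norm1 e = e \<bullet> vsign e"
    unfolding norm1_def vsign_def inner_vec_def by (auto intro!: sum.cong simp: abs_sgn)
  also have "\<dots> \<le> norm e * norm (vsign e)" by (rule norm_cauchy_schwarz)
  also have "norm (vsign e) \<le> sqrt (real CARD('n))"
  proof -
    have "(norm (vsign e))\<^sup>2 = (\<Sum>i\<in>UNIV. (sgn (e $ i))\<^sup>2)"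
      unfolding power2_norm_eq_inner inner_vec_def vsign_def by (simp add: power2_eq_square)
    also have "\<dots> \<le> (\<Sum>i\<in>(UNIV::'n set). 1)"
      by (intro sum_mono) (auto simp: sgn_if)
    finally show ?thesis by (intro real_le_rsqrt) simp
  qed
  hence "norm e * norm (vsign e) \<le> norm e * sqrt (real CARD('n))" by (intro mult_left_mono) auto
  finally show ?thesis by (simp add: mult.commute)
qed

lemma step_ineq:
  fixes f :: "real ^ 'n \<Rightarrow> real" and grad :: "real ^ 'n \<Rightarrow> real ^ 'n"
  assumes grad: "\<And>y. (f has_derivative (\<lambda>h. grad y \<bullet> h)) (at y)"
    and smooth: "\<And>y z. norm (grad y - grad z) \<le> L * norm (y - z)"
    and L0: "0 \<le> L" and lam: "0 \<le> lam" and eta: "0 < \<eta>"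
    and xb: "\<And>i. lam * \<bar>x $ i\<bar> \<le> 1/2"
    and y: "y = x - \<eta> *\<^sub>R (vsign w + lam *\<^sub>R x)"
  shows "f y \<le> f x - \<eta> / 2 * norm1 (grad x) + 2 * \<eta> * norm1 (grad x - w)
           + 9/8 * L * \<eta>\<^sup>2 * real CARD('n)"
proof -
  define s where "s = vsign w + lam *\<^sub>R x"
  have yx: "y - x = - (\<eta> *\<^sub>R s)" using y s_def by simp
  have "grad x \<bullet> s = (\<Sum>i\<in>UNIV. grad x $ i * (sgn (w $ i) + lam * x $ i))"
    unfolding s_def inner_vec_def vsign_def by simp
  also have "\<dots> \<ge> (\<Sum>i\<in>UNIV. \<bar>grad x $ i\<bar> / 2 - 2 * \<bar>grad x $ i - w $ i\<bar>)"
    by (intro sum_mono coord_ineq lam xb)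
  finally have g1: "grad x \<bullet> s \<ge> norm1 (grad x) / 2 - 2 * norm1 (grad x - w)"
    unfolding norm1_def by (simp add: sum_subtractf sum_divide_distrib sum_distrib_left)
  have "(norm s)\<^sup>2 = (\<Sum>i\<in>UNIV. (sgn (w $ i) + lam * x $ i)\<^sup>2)"
    unfolding power2_norm_eq_inner s_def inner_vec_def vsign_def by (simp add: power2_eq_square)
  also have "\<dots> \<le> (\<Sum>i\<in>(UNIV::'n set). 9/4)"
    by (intro sum_mono coord_sq lam xb)
  finally have n1: "(norm s)\<^sup>2 \<le> 9/4 * real CARD('n)" by simp
  have "f y \<le> f x + grad x \<bullet> (y - x) + L / 2 * (norm (y - x))\<^sup>2"
    by (rule descent[OF grad smooth])
  also have "grad x \<bullet> (y - x) = - \<eta> * (grad x \<bullet> s)" using yx by simp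
  also have "(norm (y - x))\<^sup>2 = \<eta>\<^sup>2 * (norm s)\<^sup>2" using yx eta by (simp add: power_mult_distrib)
  finally have "f y \<le> f x - \<eta> * (grad x \<bullet> s) + L / 2 * (\<eta>\<^sup>2 * (norm s)\<^sup>2)" by simp
  moreover have "\<eta> * (grad x \<bullet> s) \<ge> \<eta> * (norm1 (grad x) / 2 - 2 * norm1 (grad x - w))"
    using g1 eta by (intro mult_left_mono) auto
  moreover have "L / 2 * (\<eta>\<^sup>2 * (norm s)\<^sup>2) \<le> L / 2 * (\<eta>\<^sup>2 * (9/4 * real CARD('n)))"
    using n1 L0 by (intro mult_left_mono) auto
  ultimately show ?thesis by (simp add: algebra_simps)
qed

lemma mean_le_rms:
  fixes a :: "nat \<Rightarrow> real"
  assumes "T \<ge> 1"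
  shows "(1 / real T) * (\<Sum>t=1..T. a t) \<le> sqrt ((1 / real T) * (\<Sum>t=1..T. (a t)\<^sup>2))"
proof (rule real_le_rsqrt)
  have c: "(\<Sum>t=1..T. a t)\<^sup>2 \<le> (\<Sum>t=1..T. (a t)\<^sup>2) * real T"
    using sum_squared_le_sum_of_squares[of a "{1..T}"] by simp
  have "((1 / real T) * (\<Sum>t=1..T. a t))\<^sup>2 = (\<Sum>t=1..T. a t)\<^sup>2 / (real T)\<^sup>2"
    by (simp add: power_divide)
  also have "\<dots> \<le> (\<Sum>t=1..T. (a t)\<^sup>2) * real T / (real T)\<^sup>2"
    using c by (intro divide_right_mono) auto
  also have "\<dots> = (1 / real T) * (\<Sum>t=1..T. (a t)\<^sup>2)" using assms by (simp add: power2_eq_square)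
  finally show "((1 / real T) * (\<Sum>t=1..T. a t))\<^sup>2 \<le> (1 / real T) * (\<Sum>t=1..T. (a t)\<^sup>2)" .
qed

lemma jensen_sqrt:
  fixes Z :: "'w \<Rightarrow> real"
  assumes P: "prob_space M" and iZ: "integrable M Z" and Z0: "\<And>\<omega>. 0 \<le> Z \<omega>"
  shows "integrable M (\<lambda>\<omega>. sqrt (Z \<omega>))" "(\<integral>\<omega>. sqrt (Z \<omega>) \<partial>M) \<le> sqrt (\<integral>\<omega>. Z \<omega> \<partial>M)"
proof -
  interpret prob_space M by (rule P)
  have mZ: "Z \<in> borel_measurable M" using iZ by simp
  have mS: "(\<lambda>\<omega>. sqrt (Z \<omega>)) \<in> borel_measurable M" using mZ by measurable
  have i1: "integrable M (\<lambda>\<omega>. 1 + Z \<omega>)" using iZ by simp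
  show iS: "integrable M (\<lambda>\<omega>. sqrt (Z \<omega>))"
  proof (rule Bochner_Integration.integrable_bound[OF i1 mS], rule AE_I2)
    fix \<omega>
    have "sqrt (Z \<omega>) \<le> 1 + Z \<omega>"
      using Z0[of \<omega>] by (intro real_le_lsqrt) (auto simp: power2_eq_square algebra_simps)
    thus "norm (sqrt (Z \<omega>)) \<le> norm (1 + Z \<omega>)" using Z0[of \<omega>] by simp
  qed
  have key: "(\<integral>\<omega>. sqrt (Z \<omega>) \<partial>M) \<le> (\<integral>\<omega>. Z \<omega> \<partial>M) / (2 * a) + a / 2" if a: "a > 0" for a
  proof -
    have pw: "sqrt (Z \<omega>) \<le> Z \<omega> / (2 * a) + a / 2" for \<omega>
    proof -
      have "0 \<le> (sqrt (Z \<omega>) - a)\<^sup>2" by simp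
      hence "2 * a * sqrt (Z \<omega>) \<le> Z \<omega> + a\<^sup>2" using Z0[of \<omega>] by (simp add: power2_eq_square algebra_simps)
      thus ?thesis using a by (simp add: field_simps power2_eq_square)
    qed
    have "(\<integral>\<omega>. sqrt (Z \<omega>) \<partial>M) \<le> (\<integral>\<omega>. Z \<omega> / (2 * a) + a / 2 \<partial>M)"
      using iS iZ pw by (intro integral_mono) auto
    also have "\<dots> = (\<integral>\<omega>. Z \<omega> \<partial>M) / (2 * a) + a / 2"
      using iZ by (simp add: prob_space)
    finally show ?thesis .
  qed
  have I0: "0 \<le> (\<integral>\<omega>. Z \<omega> \<partial>M)" using Z0 by (simp add: integral_nonneg)
  show "(\<integral>\<omega>. sqrt (Z \<omega>) \<partial>M) \<le> sqrt (\<integral>\<omega>. Z \<omega> \<partial>M)"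
  proof (cases "(\<integral>\<omega>. Z \<omega> \<partial>M) = 0")
    case True
    show ?thesis
    proof (rule ccontr)
      assume "\<not> ?thesis"
      hence p: "(\<integral>\<omega>. sqrt (Z \<omega>) \<partial>M) > 0" using True by simp
      from key[OF p] True p show False by simp
    qed
  next
    case False
    hence p: "sqrt (\<integral>\<omega>. Z \<omega> \<partial>M) > 0" using I0 by simp
    have "(\<integral>\<omega>. Z \<omega> \<partial>M) / (2 * sqrt (\<integral>\<omega>. Z \<omega> \<partial>M)) = sqrt (\<integral>\<omega>. Z \<omega> \<partial>M) / 2"
      using p I0 by (simp add: field_simps)
    with key[OF p] show ?thesis by simp
  qed
qed

theorem mainTheorem2:
  fixes f :: "real ^ 'n \<Rightarrow> real"
    and grad :: "real ^ 'n \<Rightarrow> real ^ 'n"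
    and L \<eta> lam \<Delta> :: real
    and T :: nat
    and M :: "'w measure"
    and x1 :: "real ^ 'n"
    and v :: "'w \<Rightarrow> nat \<Rightarrow> real ^ 'n"
    and x :: "'w \<Rightarrow> nat \<Rightarrow> real ^ 'n"
  assumes grad: "\<And>y. (f has_derivative (\<lambda>h. grad y \<bullet> h)) (at y)"
    and smooth: "\<And>y z. norm (grad y - grad z) \<le> L * norm (y - z)"
    and bdd: "bdd_below (range f)"
    and T: "T \<ge> 1"
    and eta: "\<eta> > 0"
    and lam: "0 \<le> lam" "lam \<le> 1 / (2 * \<eta> * real T)"
    and x1_inf: "norm_inf x1 \<le> \<eta>"
    and x1_gap: "f x1 - (INF y. f y) \<le> \<Delta>"
    and P: "prob_space M"
    and v_meas: "\<And>t. (\<lambda>\<omega>. v \<omega> t) \<in> borel_measurable M"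
    and x_init: "\<And>\<omega>. x \<omega> 1 = x1"
    and x_step: "\<And>\<omega> t. 1 \<le> t \<Longrightarrow> t \<le> T \<Longrightarrow>
                   x \<omega> (Suc t) = x \<omega> t - \<eta> *\<^sub>R (vsign (v \<omega> t) + lam *\<^sub>R x \<omega> t)"
    and err_int: "integrable M (\<lambda>\<omega>. (1 / real T) * (\<Sum>t=1..T. (norm (grad (x \<omega> t) - v \<omega> t))\<^sup>2))"
  shows "(\<integral>\<omega>. (1 / real T) * (\<Sum>t=1..T. norm1 (grad (x \<omega> t))) \<partial>M)
           \<le> 2 * \<Delta> / (\<eta> * real T)
             + 4 * sqrt (real CARD('n))
                 * sqrt (\<integral>\<omega>. (1 / real T) * (\<Sum>t=1..T. (norm (grad (x \<omega> t) - v \<omega> t))\<^sup>2) \<partial>M)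
             + 4 * \<eta> * L * real CARD('n)"
proof -
  interpret prob_space M by (rule P)
  define d where "d = real CARD('n)"
  have L0: "0 \<le> L"
  proof -
    obtain i :: 'n where True by simp
    define z :: "real ^ 'n" where "z = axis i 1"
    have "norm z > 0" unfolding z_def by simp
    moreover have "0 \<le> L * norm (0 - z)" using smooth[of 0 z] norm_ge_zero[of "grad 0 - grad z"] by linarith
    ultimately show ?thesis by (simp add: zero_le_mult_iff)
  qed
  have Tp: "real T > 0" using T by simp
  have inf_le: "(INF y. f y) \<le> f y" for y using bdd by (simp add: cINF_lower)
  have D0: "0 \<le> \<Delta>" using x1_gap inf_le[of x1] by linarith
  have etalam: "\<eta> * lam \<le> 1 / (2 * real T)"
    using lam(2) eta Tp by (simp add: field_simps)
  have etalam2: "\<eta> * lam * real T \<le> 1/2"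
    using etalam Tp by (simp add: field_simps)
  have etalam1: "\<eta> * lam \<le> 1"
  proof -
    have "1 / (2 * real T) \<le> 1" using T by (simp add: field_simps)
    thus ?thesis using etalam by linarith
  qed
  define C where "C = 2 * \<Delta> / (\<eta> * real T) + 4 * \<eta> * L * d"
  define Z where "Z \<omega> = (1 / real T) * (\<Sum>t=1..T. (norm (grad (x \<omega> t) - v \<omega> t))\<^sup>2)" for \<omega>
  define A where "A \<omega> = (1 / real T) * (\<Sum>t=1..T. norm1 (grad (x \<omega> t)))" for \<omega>
  have pw: "A \<omega> \<le> C + 4 * sqrt d * sqrt (Z \<omega>)" for \<omega>
  proof -
    define X where "X = x \<omega>"
    have cb: "\<bar>X t $ i\<bar> \<le> real t * \<eta>" if "1 \<le> t" "t \<le> T + 1" for t i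
      using that
    proof (induction t rule: dec_induct)
      case base
      have "\<bar>x1 $ i\<bar> \<le> norm_inf x1" unfolding norm_inf_def by (rule Max_ge) auto
      then show ?case using x1_inf x_init unfolding X_def by simp
    next
      case (step t)
      have tT: "t \<le> T" using step by simp
      have "X (Suc t) $ i = (1 - \<eta> * lam) * X t $ i - \<eta> * sgn (v \<omega> t $ i)"
      proof -
        have "X (Suc t) $ i = (x \<omega> t - \<eta> *\<^sub>R (vsign (v \<omega> t) + lam *\<^sub>R x \<omega> t)) $ i"
          using x_step[OF step(1) tT, of \<omega>] unfolding X_def by simp
        thus ?thesis unfolding X_def vsign_def by (simp add: algebra_simps)
      qed
      also have "\<bar>\<dots>\<bar> \<le> (1 - \<eta> * lam) * \<bar>X t $ i\<bar> + \<eta> * \<bar>sgn (v \<omega> t $ i)\<bar>"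
        using etalam1 eta abs_triangle_ineq4[of "(1 - \<eta> * lam) * X t $ i" "\<eta> * sgn (v \<omega> t $ i)"]
        by (simp add: abs_mult)
      also have "\<dots> \<le> 1 * (real t * \<eta>) + \<eta> * 1"
        using step etalam1 eta lam(1) by (intro add_mono mult_mono) (auto simp: sgn_if)
      finally show ?case by (simp add: algebra_simps)
    qed
    have xb: "lam * \<bar>X t $ i\<bar> \<le> 1/2" if "1 \<le> t" "t \<le> T" for t i
    proof -
      have "lam * \<bar>X t $ i\<bar> \<le> lam * (real T * \<eta>)"
        using cb[of t i] that lam(1) \<open>\<eta> > 0\<close>
        by (intro mult_left_mono) (auto intro: order_trans[OF _ mult_right_mono[of "real t" "real T" \<eta>]])
      thus ?thesis using etalam2 by (simp add: algebra_simps)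
    qed
    have st: "f (X (Suc t)) \<le> f (X t) - \<eta> / 2 * norm1 (grad (X t)) + 2 * \<eta> * norm1 (grad (X t) - v \<omega> t)
           + 9/8 * L * \<eta>\<^sup>2 * d" if "t \<in> {1..T}" for t
      unfolding d_def
      by (rule step_ineq[OF grad smooth L0 lam(1) eta xb]) (use that x_step in \<open>auto simp: X_def\<close>)
    have st2: "\<eta> / 2 * norm1 (grad (X t)) \<le> (f (X t) - f (X (Suc t))) + 2 * \<eta> * sqrt d * norm (grad (X t) - v \<omega> t)
           + 9/8 * L * \<eta>\<^sup>2 * d" if "t \<in> {1..T}" for t
    proof -
      have "2 * \<eta> * norm1 (grad (X t) - v \<omega> t) \<le> 2 * \<eta> * (sqrt d * norm (grad (X t) - v \<omega> t))"
        using norm1_le[of "grad (X t) - v \<omega> t"] eta unfolding d_def by (intro mult_left_mono) auto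
      thus ?thesis using st[OF that] by (simp add: algebra_simps)
    qed
    have "(\<Sum>t=1..T. \<eta> / 2 * norm1 (grad (X t))) \<le> (\<Sum>t=1..T. (f (X t) - f (X (Suc t))) + 2 * \<eta> * sqrt d * norm (grad (X t) - v \<omega> t)
           + 9/8 * L * \<eta>\<^sup>2 * d)"
      by (rule sum_mono) (rule st2)
    also have "\<dots> = (f (X 1) - f (X (Suc T))) + 2 * \<eta> * sqrt d * (\<Sum>t=1..T. norm (grad (X t) - v \<omega> t))
           + real T * (9/8 * L * \<eta>\<^sup>2 * d)"
    proof -
      have "(\<Sum>t=1..T. (f (X t) - f (X (Suc t)))) = f (X 1) - f (X (Suc T))"
        using sum_Suc_diff[of 1 T "\<lambda>t. - f (X t)"] T by simp
      thus ?thesis using T by (simp add: sum.distrib sum_distrib_left)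
    qed
    also have "f (X 1) - f (X (Suc T)) \<le> \<Delta>"
      using x1_gap inf_le[of "X (Suc T)"] x_init unfolding X_def by simp
    finally have S: "\<eta> / 2 * (\<Sum>t=1..T. norm1 (grad (X t))) \<le> \<Delta> + 2 * \<eta> * sqrt d * (\<Sum>t=1..T. norm (grad (X t) - v \<omega> t))
           + real T * (9/8 * L * \<eta>\<^sup>2 * d)"
      by (simp add: sum_distrib_left)
    have "A \<omega> = (2 / (\<eta> * real T)) * (\<eta> / 2 * (\<Sum>t=1..T. norm1 (grad (X t))))"
      unfolding A_def X_def using eta Tp by (simp add: field_simps)
    also have "\<dots> \<le> (2 / (\<eta> * real T)) * (\<Delta> + 2 * \<eta> * sqrt d * (\<Sum>t=1..T. norm (grad (X t) - v \<omega> t))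
           + real T * (9/8 * L * \<eta>\<^sup>2 * d))"
      using S eta Tp by (intro mult_left_mono) auto
    also have "\<dots> = 2 * \<Delta> / (\<eta> * real T) + 4 * sqrt d * ((1 / real T) * (\<Sum>t=1..T. norm (grad (X t) - v \<omega> t)))
           + 9/4 * \<eta> * L * d"
      using eta Tp by (simp add: field_simps power2_eq_square)
    also have "4 * sqrt d * ((1 / real T) * (\<Sum>t=1..T. norm (grad (X t) - v \<omega> t))) \<le> 4 * sqrt d * sqrt (Z \<omega>)"
      unfolding Z_def X_def by (intro mult_left_mono mean_le_rms[OF T]) (auto simp: d_def)
    also have "9/4 * \<eta> * L * d \<le> 4 * \<eta> * L * d"
      using eta L0 by (intro mult_right_mono) (auto simp: d_def)
    finally show ?thesis unfolding C_def by simp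
  qed
  have Z0: "0 \<le> Z \<omega>" for \<omega> unfolding Z_def using Tp by (auto intro!: sum_nonneg divide_nonneg_pos)
  have iZ: "integrable M Z" using err_int unfolding Z_def .
  note J = jensen_sqrt[OF P iZ Z0]
  have C0: "0 \<le> C" unfolding C_def d_def using D0 eta Tp L0 by auto
  have "(\<integral>\<omega>. A \<omega> \<partial>M) \<le> (\<integral>\<omega>. C + 4 * sqrt d * sqrt (Z \<omega>) \<partial>M)"
    using J(1) pw C0 Z0 by (intro integral_mono_AE') (auto simp: d_def)
  also have "\<dots> = C + 4 * sqrt d * (\<integral>\<omega>. sqrt (Z \<omega>) \<partial>M)"
    using J(1) by (simp add: prob_space)
  also have "\<dots> \<le> C + 4 * sqrt d * sqrt (\<integral>\<omega>. Z \<omega> \<partial>M)"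
    using J(2) by (intro add_left_mono mult_left_mono) (auto simp: d_def)
  finally show ?thesis unfolding A_def C_def Z_def d_def by simp
qed

end
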